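(* Let $k\le l$ be positive integers with $\gcd(k,l)=1$, let $n\ge1$ and $m\ge 0$ be integers, and write $m=qn+r$ with integers $q\ge 0$, $0\le r<n$. If $\frac{n}{q+2}\le r\le \frac{nk}{k+l}$, then $L^{k,l}(m,n)=nkq+r(k+l)$. If $r\ge \frac{nk}{k+l}$, then $L^{k,l}(m,n)=nk(q+1)$.
   Context: $\mathcal D^{k,l}(m,n)$ denotes the set of all $nk\times nl$ matrices with nonnegative integer entries all of whose row sums equal $ml$ and all of whose column sums equal $mk$. For an $s\times t$ matrix $A=(a_{ij})$ with $s\le t$, a transversal of $A$ is a set of entries $T=\{a_{1i_1},\dots,a_{si_s}\}$ with $i_1,\dots,i_s\in\{1,\dots,t\}$ pairwise distinct, and $|T|=a_{1i_1}+\cdots+a_{si_s}$; if $s>t$, the transversals of $A$ are those of its transpose. The tropical determinant is ${\rm tdet}(A)=\max_T|T|$, and $L^{k,l}(m,n)=\min_{A\in\mathcal D^{k,l}(m,n)}{\rm tdet}(A)$. *)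

theory Defs
  imports Complex_Main
begin

(* An s x t matrix with nonnegative integer entries is represented by
   A :: nat => nat => nat, rows indexed by {0..<s}, columns by {0..<t};
   entries outside this range are required to be 0 (canonical representative). *)

definition DKL :: "nat \<Rightarrow> nat \<Rightarrow> nat \<Rightarrow> nat \<Rightarrow> (nat \<Rightarrow> nat \<Rightarrow> nat) set" where
  "DKL k l m n = {A. (\<forall>i j. (i \<ge> n*k \<or> j \<ge> n*l) \<longrightarrow> A i j = 0)
      \<and> (\<forall>i<n*k. (\<Sum>j<n*l. A i j) = m*l)
      \<and> (\<forall>j<n*l. (\<Sum>i<n*k. A i j) = m*k)}"

definition transversal_weights :: "nat \<Rightarrow> nat \<Rightarrow> (nat \<Rightarrow> nat \<Rightarrow> nat) \<Rightarrow> nat set" where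
  "transversal_weights s t A =
     (if s \<le> t then {(\<Sum>i<s. A i (\<sigma> i)) | \<sigma>. inj_on \<sigma> {..<s} \<and> \<sigma> ` {..<s} \<subseteq> {..<t}}
      else {(\<Sum>j<t. A (\<sigma> j) j) | \<sigma>. inj_on \<sigma> {..<t} \<and> \<sigma> ` {..<t} \<subseteq> {..<s}})"

definition tdet :: "nat \<Rightarrow> nat \<Rightarrow> (nat \<Rightarrow> nat \<Rightarrow> nat) \<Rightarrow> nat" where
  "tdet s t A = Max (transversal_weights s t A)"

definition LKL :: "nat \<Rightarrow> nat \<Rightarrow> nat \<Rightarrow> nat \<Rightarrow> nat" where
  "LKL k l m n = Min (tdet (n*k) (n*l) ` DKL k l m n)"

end

theory Submission
  imports Defs
begin

lemma hall:
  assumes "finite I" "\<forall>i\<in>I. finite (S i)" "\<forall>J\<subseteq>I. card J \<le> card (\<Union>(S ` J))"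
  shows "\<exists>f. inj_on f I \<and> (\<forall>i\<in>I. f i \<in> S i)"
  using assms
proof (induction "card I" arbitrary: I S rule: less_induct)
  case less
  show ?case
  proof (cases "I = {}")
    case True then show ?thesis by auto
  next
    case Ine: False
    show ?thesis
    proof (cases "\<exists>J. J \<noteq> {} \<and> J \<subset> I \<and> card (\<Union>(S ` J)) = card J")
      case True
      then obtain J where J: "J \<noteq> {}" "J \<subset> I" "card (\<Union>(S ` J)) = card J" by blast
      have finJ: "finite J" using J(2) less.prems(1) finite_subset by auto
      have "card J < card I" using J(2) less.prems(1) psubset_card_mono by auto
      moreover have "\<forall>i\<in>J. finite (S i)" using J(2) less.prems(2) by auto
      moreover have "\<forall>K\<subseteq>J. card K \<le> card (\<Union>(S ` K))" using J(2) less.prems(3) by auto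
      ultimately obtain f1 where f1: "inj_on f1 J" "\<forall>i\<in>J. f1 i \<in> S i"
        using less.hyps[of J S] finJ by blast
      define UJ where "UJ = \<Union>(S ` J)"
      have finUJ: "finite UJ" unfolding UJ_def using finJ J(2) less.prems(2) by auto
      define S2 where "S2 i = S i - UJ" for i
      have "card (I - J) = card I - card J" using J(2) finJ by (simp add: card_Diff_subset psubset_imp_subset)
      moreover have "card J > 0" using J(1) finJ by auto
      ultimately have "card (I - J) < card I" using \<open>card J < card I\<close> by linarith
      moreover have "\<forall>K\<subseteq>I - J. card K \<le> card (\<Union>(S2 ` K))"
      proof (intro allI impI)
        fix K assume K: "K \<subseteq> I - J"
        have finK: "finite K" using K less.prems(1) finite_subset by auto
        have eq: "\<Union>(S2 ` K) = \<Union>(S ` (K \<union> J)) - UJ" unfolding S2_def UJ_def by auto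
        have "K \<union> J \<subseteq> I" using K J(2) by auto
        then have "card (K \<union> J) \<le> card (\<Union>(S ` (K \<union> J)))" using less.prems(3) by blast
        moreover have "card (K \<union> J) = card K + card J"
          using K finK finJ by (intro card_Un_disjoint) auto
        moreover have "card (\<Union>(S ` (K \<union> J))) - card UJ \<le> card (\<Union>(S2 ` K))"
          unfolding eq using diff_card_le_card_Diff finUJ by blast
        ultimately show "card K \<le> card (\<Union>(S2 ` K))" using J(3) unfolding UJ_def by linarith
      qed
      ultimately obtain f2 where f2: "inj_on f2 (I - J)" "\<forall>i\<in>I - J. f2 i \<in> S2 i"
        using less.hyps[of "I - J" S2] less.prems unfolding S2_def by auto
      define f where "f i = (if i \<in> J then f1 i else f2 i)" for i
      have "inj_on f I"
        unfolding inj_on_def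
      proof (intro ballI impI)
        fix x y assume xy: "x \<in> I" "y \<in> I" "f x = f y"
        show "x = y"
        proof (cases "x \<in> J"; cases "y \<in> J")
          assume "x \<in> J" "y \<in> J" then show ?thesis using xy f1 unfolding f_def inj_on_def by auto
        next
          assume a: "x \<in> J" "y \<notin> J"
          then have "f x \<in> UJ" using f1 unfolding f_def UJ_def by auto
          moreover have "f y \<notin> UJ" proof -
            have "f y = f2 y" using a unfolding f_def by simp
            moreover have "y \<in> I - J" using a xy by auto
            ultimately show ?thesis using f2(2) unfolding S2_def by auto
          qed
          ultimately show ?thesis using xy by auto
        next
          assume a: "x \<notin> J" "y \<in> J"
          then have "f y \<in> UJ" using f1 unfolding f_def UJ_def by auto
          moreover have "f x \<notin> UJ" proof -
            have "f x = f2 x" using a unfolding f_def by simp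
            moreover have "x \<in> I - J" using a xy by auto
            ultimately show ?thesis using f2(2) unfolding S2_def by auto
          qed
          ultimately show ?thesis using xy by auto
        next
          assume "x \<notin> J" "y \<notin> J" then show ?thesis using xy f2 unfolding f_def inj_on_def by auto
        qed
      qed
      moreover have "\<forall>i\<in>I. f i \<in> S i" using f1 f2 unfolding f_def S2_def by auto
      ultimately show ?thesis by blast
    next
      case False
      then have strict: "\<And>J. J \<noteq> {} \<Longrightarrow> J \<subset> I \<Longrightarrow> card J < card (\<Union>(S ` J))"
        using less.prems(3) by (metis le_neq_implies_less psubset_imp_subset)
      obtain i0 where i0: "i0 \<in> I" using Ine by auto
      have "card {i0} \<le> card (S i0)" using less.prems(3)[rule_format, of "{i0}"] i0 by auto
      then have "S i0 \<noteq> {}" by auto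
      then obtain x where x: "x \<in> S i0" by auto
      define S' where "S' i = S i - {x}" for i
      have "card (I - {i0}) < card I" proof -
        have "card I > 0" using i0 less.prems(1) card_gt_0_iff by blast
        then show ?thesis using i0 less.prems(1) by (simp add: card_Diff_singleton)
      qed
      moreover have "\<forall>K\<subseteq>I - {i0}. card K \<le> card (\<Union>(S' ` K))"
      proof (intro allI impI)
        fix K assume K: "K \<subseteq> I - {i0}"
        show "card K \<le> card (\<Union>(S' ` K))"
        proof (cases "K = {}")
          case True then show ?thesis by simp
        next
          case False
          then have "card K < card (\<Union>(S ` K))" using strict K i0 by blast
          moreover have "\<Union>(S' ` K) = \<Union>(S ` K) - {x}" unfolding S'_def by auto
          moreover have "card (\<Union>(S ` K)) - 1 \<le> card (\<Union>(S ` K) - {x})"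
            using diff_card_le_card_Diff[of "{x}" "\<Union>(S ` K)"] by simp
          ultimately show ?thesis by simp
        qed
      qed
      ultimately obtain f' where f': "inj_on f' (I - {i0})" "\<forall>i\<in>I - {i0}. f' i \<in> S' i"
        using less.hyps[of "I - {i0}" S'] less.prems unfolding S'_def by auto
      define f where "f = f'(i0 := x)"
      have "inj_on f I"
      proof (rule inj_onI)
        fix a b assume ab: "a \<in> I" "b \<in> I" "f a = f b"
        show "a = b"
        proof (cases "a = i0"; cases "b = i0")
          assume "a \<noteq> i0" "b \<noteq> i0"
          then show ?thesis using ab f'(1) unfolding f_def inj_on_def by auto
        next
          assume c: "a \<noteq> i0" "b = i0"
          then have "f a \<in> S' a" using f'(2) ab unfolding f_def by auto
          then show ?thesis using ab c unfolding f_def S'_def by auto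
        next
          assume c: "a = i0" "b \<noteq> i0"
          then have "f b \<in> S' b" using f'(2) ab unfolding f_def by auto
          then show ?thesis using ab c unfolding f_def S'_def by auto
        qed simp
      qed
      moreover have "\<forall>i\<in>I. f i \<in> S i" using f' x unfolding f_def S'_def by auto
      ultimately show ?thesis by blast
    qed
  qed
qed

lemma hall_perm:
  fixes N :: nat
  assumes "\<forall>X \<subseteq> {..<N}. card X \<le> card {j. j < N \<and> (\<exists>i\<in>X. E i j)}"
  shows "\<exists>\<sigma>. inj_on \<sigma> {..<N} \<and> (\<forall>i<N. \<sigma> i < N \<and> E i (\<sigma> i))"
proof -
  have eq: "\<And>X. \<Union>((\<lambda>i. {j. j<N \<and> E i j}) ` X) = {j. j < N \<and> (\<exists>i\<in>X. E i j)}" by auto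
  have "\<exists>f. inj_on f {..<N} \<and> (\<forall>i\<in>{..<N}. f i \<in> {j. j<N \<and> E i j})"
  proof (rule hall)
    show "\<forall>J\<subseteq>{..<N}. card J \<le> card (\<Union>((\<lambda>i. {j. j<N \<and> E i j}) ` J))"
      using assms unfolding eq by blast
  qed auto
  then show ?thesis by auto
qed

definition cov :: "nat \<Rightarrow> (nat \<Rightarrow> nat \<Rightarrow> nat) \<Rightarrow> (nat \<Rightarrow> int) \<Rightarrow> (nat \<Rightarrow> int) \<Rightarrow> bool" where
  "cov N w u v \<longleftrightarrow> (\<forall>i<N. \<forall>j<N. int (w i j) \<le> u i + v j)"

lemma perm_sum:
  assumes "inj_on \<sigma> {..<N}" "\<sigma> ` {..<N} \<subseteq> {..<N}"
  shows "(\<Sum>i<N. (g::nat\<Rightarrow>int) (\<sigma> i)) = (\<Sum>j<N. g j)"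
proof -
  have "\<sigma> ` {..<N} = {..<N}" using endo_inj_surj[of "{..<N}" \<sigma>] assms by auto
  then have "(\<Sum>j<N. g j) = sum g (\<sigma> ` {..<N})" by simp
  also have "\<dots> = (\<Sum>i<N. g (\<sigma> i))" using sum.reindex[OF assms(1), of g] by simp
  finally show ?thesis by simp
qed

lemma weak_dual:
  assumes "cov N w u v" "inj_on \<sigma> {..<N}" "\<sigma> ` {..<N} \<subseteq> {..<N}"
  shows "(\<Sum>i<N. int (w i (\<sigma> i))) \<le> sum u {..<N} + sum v {..<N}"
proof -
  have "(\<Sum>i<N. int (w i (\<sigma> i))) \<le> (\<Sum>i<N. u i + v (\<sigma> i))"
    using assms unfolding cov_def by (intro sum_mono) auto
  also have "\<dots> = sum u {..<N} + (\<Sum>i<N. v (\<sigma> i))" by (simp add: sum.distrib)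
  also have "\<dots> = sum u {..<N} + sum v {..<N}" using perm_sum[OF assms(2,3)] by simp
  finally show ?thesis .
qed

lemma sum_indic: fixes N :: nat shows "X \<subseteq> {..<N} \<Longrightarrow> (\<Sum>i<N. if i \<in> X then 1 else 0::int) = int (card X)"
proof -
  assume X: "X \<subseteq> {..<N}"
  have "(\<Sum>i<N. if i \<in> X then 1 else 0::int) = sum (\<lambda>_. 1) {i\<in>{..<N}. i \<in> X}"
    by (rule sum.inter_filter[symmetric]) simp
  also have "{i\<in>{..<N}. i \<in> X} = X" using X by auto
  finally show ?thesis by simp
qed

lemma strong_dual:
  "\<exists>u v \<sigma>. cov N w u v \<and> inj_on \<sigma> {..<N} \<and> \<sigma> ` {..<N} \<subseteq> {..<N}
      \<and> (\<Sum>i<N. int (w i (\<sigma> i))) = sum u {..<N} + sum v {..<N}"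
proof -
  define base where "base = (\<Sum>i<N. int (w i i))"
  define cost where "cost p = sum (fst p) {..<N} + sum (snd p) {..<N}" for p :: "(nat \<Rightarrow> int) \<times> (nat \<Rightarrow> int)"
  have base_le: "base \<le> cost p" if "cov N w (fst p) (snd p)" for p
    using weak_dual[OF that, of id] unfolding base_def cost_def by auto
  have "cov N w (fst (\<lambda>i. int (\<Sum>j<N. w i j), \<lambda>j. 0)) (snd (\<lambda>i. int (\<Sum>j<N. w i j), \<lambda>j. 0::int))"
    unfolding cov_def by (auto intro!: member_le_sum)
  from ex_has_least_nat[where P = "\<lambda>p. cov N w (fst p) (snd p)" and m = "\<lambda>p. nat (cost p - base)", OF this]
  obtain p where p: "cov N w (fst p) (snd p)"
    and pmin: "\<And>p'. cov N w (fst p') (snd p') \<Longrightarrow> nat (cost p - base) \<le> nat (cost p' - base)" by blast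
  define u where "u = fst p"
  define v where "v = snd p"
  have cuv: "cov N w u v" using p unfolding u_def v_def .
  have min: "sum u {..<N} + sum v {..<N} \<le> sum u' {..<N} + sum v' {..<N}" if "cov N w u' v'" for u' v'
  proof -
    have "nat (cost p - base) \<le> nat (cost (u', v') - base)" using pmin[of "(u', v')"] that by simp
    moreover have "base \<le> cost p" using base_le p by blast
    moreover have "base \<le> cost (u',v')" using base_le that by simp
    ultimately have "cost p \<le> cost (u', v')" by linarith
    then show ?thesis unfolding cost_def u_def v_def by simp
  qed
  define T where "T i j \<longleftrightarrow> int (w i j) = u i + v j" for i j
  have hallc: "\<forall>X \<subseteq> {..<N}. card X \<le> card {j. j < N \<and> (\<exists>i\<in>X. T i j)}"
  proof (rule ccontr)
    assume "\<not> ?thesis"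
    then obtain X where X: "X \<subseteq> {..<N}" and lt: "card {j. j < N \<and> (\<exists>i\<in>X. T i j)} < card X" by auto
    define NX where "NX = {j. j < N \<and> (\<exists>i\<in>X. T i j)}"
    have NXs: "NX \<subseteq> {..<N}" unfolding NX_def by auto
    define u' where "u' i = u i - (if i \<in> X then 1 else 0)" for i
    define v' where "v' j = v j + (if j \<in> NX then 1 else 0)" for j
    have "cov N w u' v'" unfolding cov_def
    proof (intro allI impI)
      fix i j assume ij: "i < N" "j < N"
      have c: "int (w i j) \<le> u i + v j" using cuv ij unfolding cov_def by auto
      show "int (w i j) \<le> u' i + v' j"
      proof (cases "i \<in> X")
        case False then show ?thesis using c unfolding u'_def v'_def by auto
      next
        case True
        show ?thesis
        proof (cases "j \<in> NX")
          case True then show ?thesis using c \<open>i \<in> X\<close> unfolding u'_def v'_def by auto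
        next
          case False
          then have "\<not> T i j" using \<open>i \<in> X\<close> ij unfolding NX_def by auto
          then have "int (w i j) < u i + v j" using c unfolding T_def by auto
          then show ?thesis using False \<open>i \<in> X\<close> unfolding u'_def v'_def by auto
        qed
      qed
    qed
    then have "sum u {..<N} + sum v {..<N} \<le> sum u' {..<N} + sum v' {..<N}" by (rule min)
    moreover have "sum u' {..<N} = sum u {..<N} - int (card X)"
      unfolding u'_def using sum_indic[OF X] by (simp add: sum_subtractf)
    moreover have "sum v' {..<N} = sum v {..<N} + int (card NX)"
      unfolding v'_def using sum_indic[OF NXs] by (simp add: sum.distrib)
    ultimately show False using lt unfolding NX_def by linarith
  qed
  from hall_perm[OF hallc] obtain \<sigma> where \<sigma>: "inj_on \<sigma> {..<N}" "\<forall>i<N. \<sigma> i < N \<and> T i (\<sigma> i)" by blast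
  have sub: "\<sigma> ` {..<N} \<subseteq> {..<N}" using \<sigma> by auto
  have "(\<Sum>i<N. int (w i (\<sigma> i))) = (\<Sum>i<N. u i + v (\<sigma> i))"
    using \<sigma>(2) unfolding T_def by (intro sum.cong) auto
  also have "\<dots> = sum u {..<N} + (\<Sum>i<N. v (\<sigma> i))" by (simp add: sum.distrib)
  also have "\<dots> = sum u {..<N} + sum v {..<N}" using perm_sum[OF \<sigma>(1) sub] by simp
  finally show ?thesis using cuv \<sigma>(1) sub by blast
qed

lemma tw_bound:
  assumes "s \<le> t"
  shows "transversal_weights s t A \<subseteq> {..(\<Sum>i<s. \<Sum>j<t. A i j)}"
proof
  fix x assume "x \<in> transversal_weights s t A"
  then obtain \<sigma> where \<sigma>: "x = (\<Sum>i<s. A i (\<sigma> i))" "\<sigma> ` {..<s} \<subseteq> {..<t}"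
    using assms unfolding transversal_weights_def by auto
  have "x \<le> (\<Sum>i<s. \<Sum>j<t. A i j)" unfolding \<sigma>(1)
  proof (rule sum_mono)
    fix i assume "i \<in> {..<s}"
    then have "\<sigma> i \<in> {..<t}" using \<sigma>(2) by auto
    then show "A i (\<sigma> i) \<le> (\<Sum>j<t. A i j)" by (intro member_le_sum) auto
  qed
  then show "x \<in> {..(\<Sum>i<s. \<Sum>j<t. A i j)}" by simp
qed

lemma tw_fin: assumes "s \<le> t" shows "finite (transversal_weights s t A)"
proof (rule finite_subset)
  show "transversal_weights s t A \<subseteq> {..(\<Sum>i<s. \<Sum>j<t. A i j)}" using tw_bound[OF assms] .
qed simp

lemma tw_mem:
  assumes "s \<le> t" "inj_on \<sigma> {..<s}" "\<sigma> ` {..<s} \<subseteq> {..<t}"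
  shows "(\<Sum>i<s. A i (\<sigma> i)) \<in> transversal_weights s t A"
proof -
  have "transversal_weights s t A = {(\<Sum>i<s. A i (\<sigma> i)) | \<sigma>. inj_on \<sigma> {..<s} \<and> \<sigma> ` {..<s} \<subseteq> {..<t}}"
    using assms(1) unfolding transversal_weights_def by simp
  then show ?thesis using assms(2,3) by blast
qed

lemma tw_ne: "s \<le> t \<Longrightarrow> transversal_weights s t A \<noteq> {}"
  using tw_mem[of s t id A] by auto

lemma tdet_ge:
  assumes "s \<le> t" "inj_on \<sigma> {..<s}" "\<sigma> ` {..<s} \<subseteq> {..<t}"
  shows "(\<Sum>i<s. A i (\<sigma> i)) \<le> tdet s t A"
  unfolding tdet_def using tw_mem[OF assms, of A] tw_fin[OF assms(1)] by (intro Max_ge)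

lemma tdet_le:
  assumes "s \<le> t" "\<forall>i<s. \<forall>j<t. A i j \<le> u i + v j"
  shows "tdet s t A \<le> sum u {..<s} + sum v {..<t}"
  unfolding tdet_def
proof (rule Max.boundedI[OF tw_fin[OF assms(1)] tw_ne[OF assms(1)]])
  fix x assume "x \<in> transversal_weights s t A"
  then obtain \<sigma> where \<sigma>: "x = (\<Sum>i<s. A i (\<sigma> i))" "inj_on \<sigma> {..<s}" "\<sigma> ` {..<s} \<subseteq> {..<t}"
    using assms unfolding transversal_weights_def by auto
  have "x \<le> (\<Sum>i<s. u i + v (\<sigma> i))" unfolding \<sigma>(1) using assms(2) \<sigma>(3) by (intro sum_mono) auto
  also have "\<dots> = sum u {..<s} + (\<Sum>i<s. v (\<sigma> i))" by (simp add: sum.distrib)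
  also have "(\<Sum>i<s. v (\<sigma> i)) = sum v (\<sigma> ` {..<s})" using sum.reindex[OF \<sigma>(2), of v] by simp
  also have "\<dots> \<le> sum v {..<t}" using \<sigma>(3) by (intro sum_mono2) auto
  finally show "x \<le> sum u {..<s} + sum v {..<t}" by simp
qed

lemma sum_split: fixes a b :: nat shows "sum f {..<a+b} = sum f {..<a} + (\<Sum>i<b. f (a+i))"
  by (induction b) (auto simp: algebra_simps)

lemma sum_div: assumes "0 < l" shows "(\<Sum>j<n*l. f (j div l)) = l * (\<Sum>b<n. (f b::nat))"
proof (induction n)
  case 0 then show ?case by simp
next
  case (Suc n)
  have "(\<Sum>j<Suc n * l. f (j div l)) = (\<Sum>j<n*l + l. f (j div l))" by (simp add: add.commute)
  also have "\<dots> = (\<Sum>j<n*l. f (j div l)) + (\<Sum>i<l. f ((n*l + i) div l))" by (rule sum_split)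
  also have "(\<Sum>i<l. f ((n*l + i) div l)) = (\<Sum>i<l. f n)"
    using assms by (intro sum.cong) auto
  finally show ?case using Suc by (simp add: algebra_simps)
qed

lemma mod_inj_aux: fixes N::nat assumes "(x + y1) mod N = (x + y2) mod N" "y1 < N" "y2 \<le> y1" shows "y1 = y2"
proof -
  have "N dvd (x + y1) - (x + y2)" using assms(1) assms(3) mod_eq_dvd_iff_nat by auto
  then have "N dvd y1 - y2" by simp
  moreover have "y1 - y2 < N" using assms by linarith
  ultimately have "y1 - y2 = 0" using dvd_imp_le by fastforce
  then show ?thesis using assms(3) by simp
qed

lemma mod_inj: fixes N::nat assumes "(x + y1) mod N = (x + y2) mod N" "y1 < N" "y2 < N" shows "y1 = y2"
  using mod_inj_aux[of x y1 N y2] mod_inj_aux[of x y2 N y1] assms by linarith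

definition circ :: "nat \<Rightarrow> nat \<Rightarrow> nat \<Rightarrow> nat \<Rightarrow> nat" where
  "circ N c x y = c div N + (if (x + y) mod N < c mod N then 1 else 0)"

lemma count_lt: fixes N d :: nat shows "d \<le> N \<Longrightarrow> (\<Sum>z<N. if z < d then 1 else 0::nat) = d"
proof -
  assume d: "d \<le> N"
  have "(\<Sum>z<N. if z < d then 1 else 0::nat) = sum (\<lambda>_. 1) {z\<in>{..<N}. z < d}"
    by (rule sum.inter_filter[symmetric]) simp
  also have "{z\<in>{..<N}. z < d} = {..<d}" using d by auto
  finally show ?thesis by simp
qed

lemma circ_row:
  assumes "0 < N" "x < N"
  shows "(\<Sum>y<N. circ N c x y) = c"
proof -
  define g where "g y = (x + y) mod N" for y
  have inj: "inj_on g {..<N}"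
  proof (rule inj_onI)
    fix y1 y2 assume "y1 \<in> {..<N}" "y2 \<in> {..<N}" "g y1 = g y2"
    then show "y1 = y2" unfolding g_def using mod_inj[of x y1 N y2] by simp
  qed
  have sub: "g ` {..<N} \<subseteq> {..<N}" unfolding g_def using assms by auto
  have img: "g ` {..<N} = {..<N}" using endo_inj_surj[OF _ sub inj] by simp
  define h where "h z = (if z < c mod N then 1 else 0::nat)" for z
  have "(\<Sum>y<N. h (g y)) = sum h (g ` {..<N})" using sum.reindex[OF inj, of h] by simp
  also have "\<dots> = (\<Sum>z<N. h z)" using img by simp
  also have "\<dots> = c mod N" unfolding h_def using assms by (intro count_lt) simp
  finally have e: "(\<Sum>y<N. h (g y)) = c mod N" .
  have "(\<Sum>y<N. circ N c x y) = (\<Sum>y<N. c div N + h (g y))"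
    unfolding circ_def h_def g_def by simp
  also have "\<dots> = N * (c div N) + c mod N" using e by (simp add: sum.distrib)
  finally show ?thesis by (simp add: mult.commute)
qed

lemma circ_sym: "circ N c x y = circ N c y x"
  unfolding circ_def by (simp add: add.commute)

lemma circ_col:
  assumes "0 < N" "y < N"
  shows "(\<Sum>x<N. circ N c x y) = c"
  using circ_row[OF assms, of c] by (simp add: circ_sym)

lemma circ_le: "circ N c x y \<le> c div N + 1"
  unfolding circ_def by simp

lemma construct:
  fixes P :: "nat \<Rightarrow> nat \<Rightarrow> nat" and U V :: "nat \<Rightarrow> nat"
  assumes "0 < k" "k \<le> l"
    and rows: "\<forall>a<n. (\<Sum>b<n. P a b) = m"
    and cols: "\<forall>b<n. (\<Sum>a<n. P a b) = m"
    and cov: "\<forall>a<n. \<forall>b<n. P a b \<le> U a + V b"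
  shows "\<exists>A\<in>DKL k l m n. tdet (n*k) (n*l) A \<le> k * sum U {..<n} + l * sum V {..<n}"
proof -
  have l0: "0 < l" using assms by simp
  define A where "A i j = (if i < n*k \<and> j < n*l then P (i div k) (j div l) else 0)" for i j
  have "A \<in> DKL k l m n"
    unfolding DKL_def
  proof (intro CollectI conjI allI impI)
    fix i j assume "n * k \<le> i \<or> n * l \<le> j"
    then show "A i j = 0" unfolding A_def by auto
  next
    fix i assume i: "i < n*k"
    then have ik: "i div k < n" by (simp add: less_mult_imp_div_less)
    have "(\<Sum>j<n*l. A i j) = (\<Sum>j<n*l. P (i div k) (j div l))"
      unfolding A_def using i by (intro sum.cong) auto
    also have "\<dots> = l * (\<Sum>b<n. P (i div k) b)" by (rule sum_div[OF l0])
    also have "\<dots> = m * l" using rows ik by simp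
    finally show "(\<Sum>j<n*l. A i j) = m * l" .
  next
    fix j assume j: "j < n*l"
    then have jl: "j div l < n" by (simp add: less_mult_imp_div_less)
    have "(\<Sum>i<n*k. A i j) = (\<Sum>i<n*k. P (i div k) (j div l))"
      unfolding A_def using j by (intro sum.cong) auto
    also have "\<dots> = k * (\<Sum>a<n. P a (j div l))" by (rule sum_div[OF assms(1)])
    also have "\<dots> = m * k" using cols jl by simp
    finally show "(\<Sum>i<n*k. A i j) = m * k" .
  qed
  moreover have "tdet (n*k) (n*l) A \<le> (\<Sum>i<n*k. U (i div k)) + (\<Sum>j<n*l. V (j div l))"
  proof (rule tdet_le)
    show "n*k \<le> n*l" using assms by simp
    show "\<forall>i<n*k. \<forall>j<n*l. A i j \<le> U (i div k) + V (j div l)"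
      unfolding A_def using cov by (auto simp: less_mult_imp_div_less)
  qed
  moreover have "(\<Sum>i<n*k. U (i div k)) = k * sum U {..<n}" by (rule sum_div[OF assms(1)])
  moreover have "(\<Sum>j<n*l. V (j div l)) = l * sum V {..<n}" by (rule sum_div[OF l0])
  ultimately show ?thesis by auto
qed

lemma argmin:
  fixes f :: "nat \<Rightarrow> int"
  assumes "finite S" "S \<noteq> {}"
  obtains x where "x \<in> S" "\<And>y. y \<in> S \<Longrightarrow> f x \<le> f y"
proof -
  have "Min (f ` S) \<in> f ` S" using assms by simp
  then obtain x where x: "x \<in> S" "f x = Min (f ` S)" by auto
  have "\<And>y. y \<in> S \<Longrightarrow> f x \<le> f y" unfolding x(2) using assms by simp
  then show ?thesis using x(1) that by blast
qed

lemma lower: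
  assumes k0: "0 < k" and kl: "k \<le> l" and n1: "1 \<le> n" and A: "A \<in> DKL k l m n"
  shows "n*k*(m div n + 1) \<le> tdet (n*k) (n*l) A \<or> n*k*(m div n) + (m mod n)*(k+l) \<le> tdet (n*k) (n*l) A"
proof -
  define s where "s = n*k"
  define N where "N = n*l"
  define q where "q = m div n"
  define r where "r = m mod n"
  have sN: "s \<le> N" unfolding s_def N_def using kl by simp
  have s0: "0 < s" unfolding s_def using k0 n1 by simp
  have zero: "\<And>i j. s \<le> i \<Longrightarrow> A i j = 0" using A unfolding DKL_def s_def by auto
  have rowsum: "\<And>i. i < s \<Longrightarrow> (\<Sum>j<N. A i j) = m*l" using A unfolding DKL_def s_def N_def by auto
  have colsum: "\<And>j. j < N \<Longrightarrow> (\<Sum>i<s. A i j) = m*k" using A unfolding DKL_def s_def N_def by auto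
  obtain u v \<sigma> where cv: "cov N A u v" and \<sigma>: "inj_on \<sigma> {..<N}" "\<sigma> ` {..<N} \<subseteq> {..<N}"
    and eq: "(\<Sum>i<N. int (A i (\<sigma> i))) = sum u {..<N} + sum v {..<N}"
    using strong_dual[of N A] by blast
  have split: "\<And>g::nat\<Rightarrow>int. sum g {..<N} = sum g {..<s} + sum g {s..<N}"
  proof -
    fix g :: "nat \<Rightarrow> int"
    have "{..<N} = {..<s} \<union> {s..<N}" using sN by auto
    moreover have "sum g ({..<s} \<union> {s..<N}) = sum g {..<s} + sum g {s..<N}"
      by (rule sum.union_disjoint) auto
    ultimately show "sum g {..<N} = sum g {..<s} + sum g {s..<N}" by simp
  qed
  have "(\<Sum>i<N. int (A i (\<sigma> i))) = (\<Sum>i<s. int (A i (\<sigma> i)))"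
    using split[of "\<lambda>i. int (A i (\<sigma> i))"] zero by simp
  moreover have "(\<Sum>i<s. A i (\<sigma> i)) \<le> tdet s N A"
  proof (rule tdet_ge[OF sN])
    show "inj_on \<sigma> {..<s}" using \<sigma>(1) by (rule inj_on_subset) (use sN in auto)
    show "\<sigma> ` {..<s} \<subseteq> {..<N}" using \<sigma>(2) sN by (meson image_mono lessThan_subset_iff order_trans)
  qed
  ultimately have costle: "sum u {..<N} + sum v {..<N} \<le> int (tdet s N A)"
    using eq by (metis of_nat_le_iff of_nat_sum)
  obtain i0 where i0: "i0 < s" "\<And>i. i < s \<Longrightarrow> u i0 \<le> u i"
    using argmin[of "{..<s}" u] s0 by auto
  obtain j0 where j0: "j0 < N" "\<And>j. j < N \<Longrightarrow> v j0 \<le> v j"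
    using argmin[of "{..<N}" v] s0 sN by auto
  define a where "a = u i0"
  define b where "b = v j0"
  define UU where "UU = sum u {..<s}"
  define PP where "PP = sum u {s..<N}"
  define VV where "VV = sum v {..<N}"
  have c1: "UU \<ge> int s * a"
  proof -
    have "(\<Sum>i<s. a) \<le> UU" unfolding UU_def a_def using i0 by (intro sum_mono) auto
    then show ?thesis by simp
  qed
  have c2: "VV \<ge> int N * b"
  proof -
    have "(\<Sum>j<N. b) \<le> VV" unfolding VV_def b_def using j0 by (intro sum_mono) auto
    then show ?thesis by simp
  qed
  have c3: "PP \<ge> int (N - s) * (- b)"
  proof -
    have "(\<Sum>i\<in>{s..<N}. - b) \<le> PP" unfolding PP_def
    proof (intro sum_mono)
      fix i assume i: "i \<in> {s..<N}"
      have "int (A i j0) \<le> u i + v j0" using cv i j0(1) unfolding cov_def by auto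
      then show "- b \<le> u i" using zero[of i j0] i unfolding b_def by auto
    qed
    then show ?thesis by simp
  qed
  have c4: "int (m*l) \<le> int N * a + VV"
  proof -
    have "int (m*l) = (\<Sum>j<N. int (A i0 j))" using rowsum[OF i0(1)] by (metis of_nat_sum)
    also have "\<dots> \<le> (\<Sum>j<N. a + v j)" unfolding a_def using cv i0(1) sN unfolding cov_def
      by (intro sum_mono) auto
    also have "\<dots> = int N * a + VV" unfolding VV_def by (simp add: sum.distrib)
    finally show ?thesis .
  qed
  have c5: "int (m*k) \<le> UU + int s * b"
  proof -
    have "int (m*k) = (\<Sum>i<s. int (A i j0))" using colsum[OF j0(1)] by (metis of_nat_sum)
    also have "\<dots> \<le> (\<Sum>i<s. u i + b)" unfolding b_def using cv j0(1) sN unfolding cov_def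
      by (intro sum_mono) auto
    also have "\<dots> = UU + int s * b" unfolding UU_def by (simp add: sum.distrib)
    finally show ?thesis .
  qed
  have cost: "sum u {..<N} + sum v {..<N} = UU + PP + VV"
    unfolding UU_def PP_def VV_def using split[of u] by simp
  have NS: "int (N - s) = int N - int s" using sN by simp
  have base: "UU + VV - (int N - int s) * b \<le> int (tdet s N A)"
    using costle cost c3 NS by (simp add: algebra_simps)
  have mqr: "m = n*q + r" unfolding q_def r_def by simp
  show ?thesis
  proof (cases "a + b \<ge> int q + 1")
    case True
    have e: "UU + VV - (int N - int s) * b \<ge> int s * (a + b)"
      using c1 c2 by (simp add: algebra_simps)
    have "int s * (a + b) \<ge> int s * (int q + 1)" using True by (intro mult_left_mono) auto
    moreover have "int (s * (q+1)) = int s * (int q + 1)" by (simp add: algebra_simps)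
    ultimately have "int (s * (q+1)) \<le> int (tdet s N A)" using e base by linarith
    then show ?thesis unfolding s_def N_def q_def by (simp only: of_nat_le_iff) simp
  next
    case False
    then have ab: "a + b \<le> int q" by simp
    have e: "UU + VV - (int N - int s) * b \<ge> int (m*k) + int (m*l) - int N * (a + b)"
      using c4 c5 by (simp add: algebra_simps)
    have "int N * (a + b) \<le> int N * int q" using ab by (intro mult_left_mono) auto
    moreover have "int (m*k) + int (m*l) - int N * int q = int (s*q + r*(k+l))"
      unfolding mqr s_def N_def by (simp add: algebra_simps)
    ultimately have "int (s*q + r*(k+l)) \<le> int (tdet s N A)" using e base by linarith
    then show ?thesis unfolding s_def N_def q_def r_def by (simp only: of_nat_le_iff) simp
  qed
qed

lemma upper2:
  assumes "0 < k" "k \<le> l" "1 \<le> n"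
  shows "\<exists>A\<in>DKL k l m n. tdet (n*k) (n*l) A \<le> n*k*(m div n + 1)"
proof -
  have n0: "0 < n" using assms by simp
  have "\<exists>A\<in>DKL k l m n. tdet (n*k) (n*l) A \<le> k * sum (\<lambda>_. m div n + 1) {..<n} + l * sum (\<lambda>_. 0) {..<n}"
  proof (rule construct[where P = "circ n m"])
    show "\<forall>a<n. (\<Sum>b<n. circ n m a b) = m" using circ_row[OF n0] by simp
    show "\<forall>b<n. (\<Sum>a<n. circ n m a b) = m" using circ_col[OF n0] by simp
    show "\<forall>a<n. \<forall>b<n. circ n m a b \<le> (m div n + 1) + 0" using circ_le by simp
  qed (use assms in auto)
  then show ?thesis by (simp add: algebra_simps)
qed

lemma upper1:
  assumes "0 < k" "k \<le> l" "1 \<le> n" "n \<le> (m mod n) * (m div n + 2)"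
  shows "\<exists>A\<in>DKL k l m n. tdet (n*k) (n*l) A \<le> n*k*(m div n) + (m mod n)*(k+l)"
proof -
  define q where "q = m div n"
  define r where "r = m mod n"
  define s0 where "s0 = n - r"
  define c0 where "c0 = r*(q+2) - n"
  have n0: "0 < n" using assms by simp
  have rn: "r < n" unfolding r_def using n0 by simp
  have hn: "n \<le> r*(q+2)" using assms(4) unfolding q_def r_def .
  have r0: "0 < r" using hn n0 by (cases r) auto
  have E1: "s0 + r = n" unfolding s0_def using rn by simp
  have E2: "c0 + n = r*(q+2)" unfolding c0_def using hn by simp
  have mqr: "m = n*q + r" unfolding q_def r_def by simp
  have c0r: "c0 div r + 1 \<le> q + 2"
  proof -
    have "c0 < (q+2) * r" using E2 n0 by (simp add: algebra_simps)
    then have "c0 div r < q + 2" using r0 by (simp add: div_less_iff_less_mult)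
    then show ?thesis by simp
  qed
  define P where "P a b = (if a < s0 then (if b < s0 then q else q+1)
      else (if b < s0 then q+1 else circ r c0 (a - s0) (b - s0)))" for a b
  define U where "U a = (if a < s0 then q else q+1)" for a
  define V where "V b = (if b < s0 then 0 else 1::nat)" for b
  have Psym: "P a b = P b a" for a b unfolding P_def using circ_sym by simp
  have rows: "\<forall>a<n. (\<Sum>b<n. P a b) = m"
  proof (intro allI impI)
    fix a assume a: "a < n"
    have "(\<Sum>b<n. P a b) = (\<Sum>b<s0. P a b) + (\<Sum>i<r. P a (s0 + i))"
      using sum_split[of "P a" s0 r] E1 by simp
    show "(\<Sum>b<n. P a b) = m"
    proof (cases "a < s0")
      case True
      have "(\<Sum>b<s0. P a b) = s0 * q" using True unfolding P_def by simp
      moreover have "(\<Sum>i<r. P a (s0 + i)) = r * (q+1)" using True unfolding P_def by simp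
      ultimately have "(\<Sum>b<n. P a b) = s0 * q + r * (q+1)"
        using \<open>(\<Sum>b<n. P a b) = _\<close> by simp
      also have "\<dots> = (s0 + r) * q + r" by (simp add: algebra_simps)
      also have "\<dots> = n * q + r" using E1 by simp
      finally show ?thesis using mqr by simp
    next
      case False
      have "(\<Sum>b<s0. P a b) = s0 * (q+1)" using False unfolding P_def by simp
      moreover have "(\<Sum>i<r. P a (s0 + i)) = (\<Sum>i<r. circ r c0 (a - s0) i)"
        using False unfolding P_def by simp
      moreover have "(\<Sum>i<r. circ r c0 (a - s0) i) = c0" using circ_row[OF r0] a E1 False by simp
      ultimately have S: "(\<Sum>b<n. P a b) = s0 * (q+1) + c0"
        using \<open>(\<Sum>b<n. P a b) = _\<close> by simp
      have "s0 * (q+1) + c0 + n = s0 * (q+1) + r*(q+2)" using E2 by simp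
      also have "\<dots> = (s0 + r) * q + (s0 + r) + r" by (simp add: algebra_simps)
      also have "\<dots> = n*q + n + r" using E1 by simp
      finally have "s0 * (q+1) + c0 = n*q + r" by simp
      then show ?thesis using S mqr by simp
    qed
  qed
  have cols: "\<forall>b<n. (\<Sum>a<n. P a b) = m" using rows Psym by simp
  have cov: "\<forall>a<n. \<forall>b<n. P a b \<le> U a + V b"
    unfolding P_def U_def V_def using circ_le[of r c0] c0r by (auto intro: order_trans)
  have sU: "sum U {..<n} = s0 * q + r * (q+1)"
  proof -
    have "sum U {..<n} = (\<Sum>b<s0. U b) + (\<Sum>i<r. U (s0 + i))"
      using sum_split[of U s0 r] E1 by simp
    then show ?thesis unfolding U_def by simp
  qed
  have sV: "sum V {..<n} = r"
  proof -
    have "sum V {..<n} = (\<Sum>b<s0. V b) + (\<Sum>i<r. V (s0 + i))"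
      using sum_split[of V s0 r] E1 by simp
    then show ?thesis unfolding V_def by simp
  qed
  obtain A where A: "A \<in> DKL k l m n" "tdet (n*k) (n*l) A \<le> k * sum U {..<n} + l * sum V {..<n}"
    using construct[OF assms(1,2) rows cols cov] by blast
  have "k * sum U {..<n} + l * sum V {..<n} = k * ((s0 + r) * q + r) + l * r"
    unfolding sU sV by (simp add: algebra_simps)
  also have "\<dots> = n*k*q + r*(k+l)" using E1 by (simp add: algebra_simps)
  finally show ?thesis using A unfolding q_def r_def by auto
qed

lemma LKL_eq:
  assumes "0 < k" "k \<le> l" "1 \<le> n"
    and low: "\<forall>A\<in>DKL k l m n. T \<le> tdet (n*k) (n*l) A"
    and up: "\<exists>A\<in>DKL k l m n. tdet (n*k) (n*l) A \<le> T"
  shows "LKL k l m n = T"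
proof -
  have fin: "finite (tdet (n*k) (n*l) ` DKL k l m n)"
  proof (rule finite_subset)
    show "tdet (n*k) (n*l) ` DKL k l m n \<subseteq> {..(n*k)*(m*l)}"
    proof
      fix x assume "x \<in> tdet (n*k) (n*l) ` DKL k l m n"
      then obtain A where A: "A \<in> DKL k l m n" "x = tdet (n*k) (n*l) A" by auto
      have "tdet (n*k) (n*l) A \<le> sum (\<lambda>_. m*l) {..<n*k} + sum (\<lambda>_. 0) {..<n*l}"
      proof (rule tdet_le)
        show "n*k \<le> n*l" using assms by simp
        show "\<forall>i<n*k. \<forall>j<n*l. A i j \<le> m*l + 0"
        proof (intro allI impI)
          fix i j assume ij: "i < n*k" "j < n*l"
          have "A i j \<le> (\<Sum>j<n*l. A i j)" using ij by (intro member_le_sum) auto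
          also have "\<dots> = m*l" using A(1) ij unfolding DKL_def by auto
          finally show "A i j \<le> m*l + 0" by simp
        qed
      qed
      then show "x \<in> {..(n*k)*(m*l)}" using A by simp
    qed
  qed simp
  obtain A0 where A0: "A0 \<in> DKL k l m n" "tdet (n*k) (n*l) A0 \<le> T" using up by blast
  have ne: "tdet (n*k) (n*l) ` DKL k l m n \<noteq> {}" using A0 by auto
  have "LKL k l m n \<le> T"
    unfolding LKL_def using A0 fin by (meson Min_le image_eqI order_trans)
  moreover have "T \<le> LKL k l m n"
    unfolding LKL_def using fin ne low by (simp add: Min_ge_iff)
  ultimately show ?thesis by simp
qed

theorem corollary4p3:
  fixes k l m n :: nat
  assumes "0 < k" and "k \<le> l" and "gcd k l = 1" and "1 \<le> n"
  defines "q \<equiv> m div n" and "r \<equiv> m mod n"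
  shows "(real n / real (q + 2) \<le> real r \<and> real r \<le> real (n*k) / real (k + l)
            \<longrightarrow> LKL k l m n = n*k*q + r*(k + l))
       \<and> (real r \<ge> real (n*k) / real (k + l) \<longrightarrow> LKL k l m n = n*k*(q + 1))"
proof (intro conjI impI)
  have kl0: "0 < real (k + l)" using assms(1) by simp
  assume h: "real n / real (q + 2) \<le> real r \<and> real r \<le> real (n*k) / real (k + l)"
  have "real n \<le> real r * real (q+2)" using h by (simp add: divide_le_eq)
  then have h1: "n \<le> r * (q+2)" by (metis of_nat_le_iff of_nat_mult)
  have "real r * real (k+l) \<le> real (n*k)" using h kl0 by (simp add: le_divide_eq)
  then have h2: "r * (k+l) \<le> n*k" by (metis of_nat_le_iff of_nat_mult)
  show "LKL k l m n = n*k*q + r*(k + l)"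
  proof (rule LKL_eq[OF assms(1,2,4)])
    show "\<forall>A\<in>DKL k l m n. n*k*q + r*(k + l) \<le> tdet (n*k) (n*l) A"
    proof
      fix A assume A: "A \<in> DKL k l m n"
      show "n*k*q + r*(k + l) \<le> tdet (n*k) (n*l) A"
        using lower[OF assms(1,2,4) A] h2 unfolding q_def r_def by (auto simp: algebra_simps)
    qed
    show "\<exists>A\<in>DKL k l m n. tdet (n*k) (n*l) A \<le> n*k*q + r*(k + l)"
      using upper1[OF assms(1,2,4)] h1 unfolding q_def r_def by auto
  qed
next
  have kl0: "0 < real (k + l)" using assms(1) by simp
  assume h: "real (n*k) / real (k + l) \<le> real r"
  have "real (n*k) \<le> real r * real (k+l)" using h kl0 by (simp add: divide_le_eq)
  then have h2: "n*k \<le> r * (k+l)" by (metis of_nat_le_iff of_nat_mult)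
  show "LKL k l m n = n*k*(q + 1)"
  proof (rule LKL_eq[OF assms(1,2,4)])
    show "\<forall>A\<in>DKL k l m n. n*k*(q + 1) \<le> tdet (n*k) (n*l) A"
    proof
      fix A assume A: "A \<in> DKL k l m n"
      show "n*k*(q + 1) \<le> tdet (n*k) (n*l) A"
        using lower[OF assms(1,2,4) A] h2 unfolding q_def r_def by (auto simp: algebra_simps)
    qed
    show "\<exists>A\<in>DKL k l m n. tdet (n*k) (n*l) A \<le> n*k*(q + 1)"
      using upper2[OF assms(1,2,4)] unfolding q_def by auto
  qed
qed

end
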